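(* Consider a Markov decision process with finite state space $\mathcal{S}$ such that, for every allowed policy $\pi$, the induced Markov chain on $\mathcal{S}$ is ergodic and reversible with respect to its stationary distribution $\mathfrak{p}_\pi$. Let $\mathfrak{p}_{\min}=\min_{s\in\mathcal{S},\pi}\mathfrak{p}_\pi(s)$, and let $\lambda_\star<1$ be an upper bound, valid for every allowed policy $\pi$, on the second largest eigenvalue of the one-step transition matrix $P_\pi=[\mathbb{P}(s_{t+1}=j\mid s_t=i,\pi)]_{ij}$. Let $\epsilon>0$ and $\gamma\in(0,1)$. If \[ \gamma\ \ge\ \frac{1-\mathfrak{p}_{\min}\,\epsilon}{1-\lambda_\star\,\mathfrak{p}_{\min}\,\epsilon}, \] then $\|\Delta_{z,z'}\|_{\mathrm{TV}}\le\epsilon$ for all $z,z'\in\mathcal{S}$ and every allowed policy $\pi$.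
   Context: For a policy $\pi$ and discount factor $\gamma$, the discounted state occupation measure from $z$ is $\rho_z(s)=(1-\gamma)\sum_{t\ge0}\gamma^t\,\mathbb{P}(s_t=s\mid s_0=z,\pi)$, and $\Delta_{z,z'}=\rho_z-\rho_{z'}$ with total variation norm $\|\Delta_{z,z'}\|_{\mathrm{TV}}=\tfrac12\sum_{s\in\mathcal{S}}|\Delta_{z,z'}(s)|$. Reversibility means $\mathfrak{p}_\pi(z)\,\mathbb{P}(s_{1}=z'\mid s_0=z,\pi)=\mathfrak{p}_\pi(z')\,\mathbb{P}(s_{1}=z\mid s_0=z',\pi)$ for all $z,z'$. The "second largest eigenvalue" means the largest eigenvalue of $P_\pi$ other than the eigenvalue $1$ (counted once); all eigenvalues of $P_\pi$ are real by reversibility. *)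

theory Defs
  imports "HOL-Analysis.Analysis"
begin

text \<open>Finite MDP: states 'S (finite), actions 'A (finite), transition kernel
  T s a s' = P(s_{t+1} = s' | s_t = s, a_t = a); a (stochastic, stationary) policy
  pol s a = P(a_t = a | s_t = s).\<close>

definition is_distribution :: "('a::finite \<Rightarrow> real) \<Rightarrow> bool" where
  "is_distribution q \<longleftrightarrow> (\<forall>x. 0 \<le> q x) \<and> (\<Sum>x\<in>UNIV. q x) = 1"

definition stochastic :: "('a::finite \<Rightarrow> 'a \<Rightarrow> real) \<Rightarrow> bool" where
  "stochastic P \<longleftrightarrow> (\<forall>i. is_distribution (P i))"

definition induced_chain ::
  "('S::finite \<Rightarrow> 'A::finite \<Rightarrow> 'S \<Rightarrow> real) \<Rightarrow> ('S \<Rightarrow> 'A \<Rightarrow> real) \<Rightarrow> 'S \<Rightarrow> 'S \<Rightarrow> real" where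
  "induced_chain T pol i j = (\<Sum>a\<in>UNIV. pol i a * T i a j)"

fun nstep :: "('S::finite \<Rightarrow> 'S \<Rightarrow> real) \<Rightarrow> nat \<Rightarrow> 'S \<Rightarrow> 'S \<Rightarrow> real" where
  "nstep P 0 i j = (if i = j then 1 else 0)"
| "nstep P (Suc n) i j = (\<Sum>k\<in>UNIV. nstep P n i k * P k j)"

definition irreducible_chain :: "('S::finite \<Rightarrow> 'S \<Rightarrow> real) \<Rightarrow> bool" where
  "irreducible_chain P \<longleftrightarrow> (\<forall>i j. \<exists>n. nstep P n i j > 0)"

definition period :: "('S::finite \<Rightarrow> 'S \<Rightarrow> real) \<Rightarrow> 'S \<Rightarrow> nat" where
  "period P i = Gcd {n. n > 0 \<and> nstep P n i i > 0}"

definition aperiodic_chain :: "('S::finite \<Rightarrow> 'S \<Rightarrow> real) \<Rightarrow> bool" where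
  "aperiodic_chain P \<longleftrightarrow> (\<forall>i. period P i = 1)"

definition ergodic_chain :: "('S::finite \<Rightarrow> 'S \<Rightarrow> real) \<Rightarrow> bool" where
  "ergodic_chain P \<longleftrightarrow> stochastic P \<and> irreducible_chain P \<and> aperiodic_chain P"

definition is_stationary :: "('S::finite \<Rightarrow> 'S \<Rightarrow> real) \<Rightarrow> ('S \<Rightarrow> real) \<Rightarrow> bool" where
  "is_stationary P p \<longleftrightarrow> is_distribution p \<and> (\<forall>j. (\<Sum>i\<in>UNIV. p i * P i j) = p j)"

text \<open>The stationary distribution (unique for ergodic chains).\<close>
definition stationary_dist :: "('S::finite \<Rightarrow> 'S \<Rightarrow> real) \<Rightarrow> 'S \<Rightarrow> real" where
  "stationary_dist P = (THE p. is_stationary P p)"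

definition reversible_wrt :: "('S::finite \<Rightarrow> 'S \<Rightarrow> real) \<Rightarrow> ('S \<Rightarrow> real) \<Rightarrow> bool" where
  "reversible_wrt P p \<longleftrightarrow> (\<forall>z z'. p z * P z z' = p z' * P z' z)"

definition trans_matrix :: "('S::finite \<Rightarrow> 'S \<Rightarrow> real) \<Rightarrow> real^'S^'S" where
  "trans_matrix P = (\<chi> i j. P i j)"

definition is_eigenvalue :: "real^'n^'n \<Rightarrow> real \<Rightarrow> bool" where
  "is_eigenvalue M \<mu> \<longleftrightarrow> (\<exists>v. v \<noteq> 0 \<and> M *v v = \<mu> *\<^sub>R v)"

definition occupation :: "('S::finite \<Rightarrow> 'S \<Rightarrow> real) \<Rightarrow> real \<Rightarrow> 'S \<Rightarrow> 'S \<Rightarrow> real" where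
  "occupation P \<gamma> z s = (1 - \<gamma>) * (\<Sum>t. \<gamma> ^ t * nstep P t z s)"

definition tv_diff :: "('S::finite \<Rightarrow> 'S \<Rightarrow> real) \<Rightarrow> real \<Rightarrow> 'S \<Rightarrow> 'S \<Rightarrow> real" where
  "tv_diff P \<gamma> z z' = (1/2) * (\<Sum>s\<in>UNIV. \<bar>occupation P \<gamma> z s - occupation P \<gamma> z' s\<bar>)"

end

theory Submission
  imports Defs
begin


lemma nstep_nonneg: "stochastic P \<Longrightarrow> 0 \<le> nstep P n i j"
  by (induction n arbitrary: j) (auto simp: stochastic_def is_distribution_def intro!: sum_nonneg)

lemma nstep_rowsum: "stochastic P \<Longrightarrow> (\<Sum>j\<in>UNIV. nstep P n i j) = 1"
proof (induction n)
  case 0 then show ?case by simp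
next
  case (Suc n)
  have "(\<Sum>j\<in>UNIV. nstep P (Suc n) i j) = (\<Sum>j\<in>UNIV. \<Sum>k\<in>UNIV. nstep P n i k * P k j)"
    by simp
  also have "\<dots> = (\<Sum>k\<in>UNIV. \<Sum>j\<in>UNIV. nstep P n i k * P k j)"
    by (rule sum.swap)
  also have "\<dots> = (\<Sum>k\<in>UNIV. nstep P n i k * (\<Sum>j\<in>UNIV. P k j))"
    by (simp add: sum_distrib_left)
  also have "\<dots> = 1" using Suc by (simp add: stochastic_def is_distribution_def)
  finally show ?case .
qed

lemma nstep_le1: "stochastic P \<Longrightarrow> nstep P n i j \<le> 1"
proof -
  assume s: "stochastic P"
  have "nstep P n i j \<le> (\<Sum>j\<in>UNIV. nstep P n i j)"
    by (rule member_le_sum) (auto simp: nstep_nonneg[OF s])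
  then show ?thesis using nstep_rowsum[OF s] by simp
qed

lemma nstep_right_fix:
  assumes "\<forall>i. (\<Sum>j\<in>UNIV. P i j * x j) = x i"
  shows "(\<Sum>j\<in>UNIV. nstep P n i j * x j) = x i"
proof (induction n arbitrary: i)
  case 0
  have "(\<Sum>j\<in>UNIV. (if i = j then 1 else 0) * x j) = (\<Sum>j\<in>UNIV. if i = j then x j else 0)"
    by (rule sum.cong) auto
  then show ?case by simp
next
  case (Suc n)
  have "(\<Sum>j\<in>UNIV. nstep P (Suc n) i j * x j) = (\<Sum>j\<in>UNIV. \<Sum>k\<in>UNIV. nstep P n i k * P k j * x j)"
    by (simp add: sum_distrib_right)
  also have "\<dots> = (\<Sum>k\<in>UNIV. \<Sum>j\<in>UNIV. nstep P n i k * P k j * x j)"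
    by (rule sum.swap)
  also have "\<dots> = (\<Sum>k\<in>UNIV. nstep P n i k * (\<Sum>j\<in>UNIV. P k j * x j))"
    by (simp add: sum_distrib_left mult.assoc)
  also have "\<dots> = x i" using Suc assms by simp
  finally show ?case .
qed

lemma nstep_left_fix:
  assumes "\<forall>j. (\<Sum>i\<in>UNIV. r i * P i j) = r j"
  shows "(\<Sum>i\<in>UNIV. r i * nstep P n i j) = r j"
proof (induction n arbitrary: j)
  case 0
  have "(\<Sum>i\<in>UNIV. r i * (if i = j then 1 else 0)) = (\<Sum>i\<in>UNIV. if i = j then r i else 0)"
    by (rule sum.cong) auto
  then show ?case by simp
next
  case (Suc n)
  have "(\<Sum>i\<in>UNIV. r i * nstep P (Suc n) i j) = (\<Sum>i\<in>UNIV. \<Sum>k\<in>UNIV. r i * nstep P n i k * P k j)"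
    by (simp add: sum_distrib_left mult.assoc)
  also have "\<dots> = (\<Sum>k\<in>UNIV. \<Sum>i\<in>UNIV. r i * nstep P n i k * P k j)"
    by (rule sum.swap)
  also have "\<dots> = (\<Sum>k\<in>UNIV. (\<Sum>i\<in>UNIV. r i * nstep P n i k) * P k j)"
    by (simp add: sum_distrib_right)
  also have "\<dots> = r j" using Suc assms by simp
  finally show ?case .
qed

lemma stat_row_pos:
  assumes s: "stochastic P" and irr: "irreducible_chain P"
    and st: "\<forall>j. (\<Sum>i\<in>UNIV. r i * P i j) = r j" and nn: "\<forall>i. 0 \<le> r i" and pos: "r i0 > 0"
  shows "r j > 0"
proof -
  obtain n where n: "nstep P n i0 j > 0" using irr unfolding irreducible_chain_def by blast
  have "r i0 * nstep P n i0 j \<le> (\<Sum>i\<in>UNIV. r i * nstep P n i j)"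
    by (rule member_le_sum[where f="\<lambda>i. r i * nstep P n i j"]) (auto simp: nn nstep_nonneg[OF s])
  moreover have "r i0 * nstep P n i0 j > 0" by (rule mult_pos_pos[OF pos n])
  moreover have "(\<Sum>i\<in>UNIV. r i * nstep P n i j) = r j" by (rule nstep_left_fix[OF st])
  ultimately show ?thesis by linarith
qed

lemma stat_pos:
  assumes s: "stochastic P" and irr: "irreducible_chain P" and q: "is_stationary P q"
  shows "q j > 0"
proof -
  have nn: "\<forall>i. 0 \<le> q i" and s1: "(\<Sum>i\<in>UNIV. q i) = 1"
    and st: "\<forall>j. (\<Sum>i\<in>UNIV. q i * P i j) = q j"
    using q unfolding is_stationary_def is_distribution_def by auto
  have "\<exists>i. q i \<noteq> 0"
  proof (rule ccontr)
    assume "\<not> ?thesis"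
    then have "(\<Sum>i\<in>UNIV. q i) = 0" by simp
    then show False using s1 by simp
  qed
  then obtain i0 where "q i0 \<noteq> 0" by blast
  then have "q i0 > 0" using nn by (simp add: order_less_le)
  then show ?thesis using stat_row_pos[OF s irr st nn] by blast
qed

lemma stat_unique:
  assumes s: "stochastic P" and irr: "irreducible_chain P"
    and p: "is_stationary P p" and q: "is_stationary P q"
  shows "q = p"
proof -
  have pp: "\<And>i. p i > 0" using stat_pos[OF s irr p] .
  define c where "c = Min (range (\<lambda>i. q i / p i))"
  have "c \<in> range (\<lambda>i. q i / p i)" unfolding c_def by (rule Min_in) auto
  then obtain i1 where i1: "c = q i1 / p i1" by auto
  have cle: "c \<le> q i / p i" for i unfolding c_def by (rule Min_le) auto
  define r where "r i = q i - c * p i" for i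
  have rnn: "0 \<le> r i" for i using cle[of i] pp[of i] by (simp add: r_def field_simps)
  have r1: "r i1 = 0" using i1 pp[of i1] by (simp add: r_def)
  have rst: "\<forall>j. (\<Sum>i\<in>UNIV. r i * P i j) = r j"
  proof
    fix j
    have "(\<Sum>i\<in>UNIV. r i * P i j) = (\<Sum>i\<in>UNIV. q i * P i j) - c * (\<Sum>i\<in>UNIV. p i * P i j)"
      by (simp add: r_def left_diff_distrib sum_subtractf sum_distrib_left mult.assoc)
    then show "(\<Sum>i\<in>UNIV. r i * P i j) = r j" using p q by (simp add: r_def is_stationary_def)
  qed
  have r0: "r i = 0" for i
  proof (rule ccontr)
    assume "r i \<noteq> 0" then have "r i > 0" using rnn[of i] by simp
    then have "r i1 > 0" using stat_row_pos[OF s irr rst] rnn by blast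
    then show False using r1 by simp
  qed
  then have qc: "q i = c * p i" for i by (simp add: r_def)
  have "1 = (\<Sum>i\<in>UNIV. q i)" using q by (simp add: is_stationary_def is_distribution_def)
  also have "\<dots> = c" using p by (simp add: qc sum_distrib_left[symmetric] is_stationary_def is_distribution_def)
  finally show ?thesis using qc by auto
qed

lemma stat_exists:
  fixes P :: "'S::finite \<Rightarrow> 'S \<Rightarrow> real"
  assumes s: "stochastic P"
  shows "\<exists>q. is_stationary P q"
proof -
  define A :: "real^'S^'S" where "A = (\<chi> i j. P i j - (if i = j then 1 else 0))"
  have "A *v ((\<chi> i. 1)::real^'S) = 0"
  proof -
    have "(\<Sum>j\<in>UNIV. P i j - (if i = j then 1 else 0)) = 0" for i
      using s by (simp add: sum_subtractf stochastic_def is_distribution_def)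
    then show ?thesis by (simp add: A_def matrix_vector_mult_def vec_eq_iff)
  qed
  moreover have "((\<chi> i. 1)::real^'S) \<noteq> 0" by (simp add: vec_eq_iff)
  ultimately have "\<not> (\<exists>B. B ** A = mat 1)" unfolding matrix_left_invertible_ker by blast
  then have "det A = 0" using invertible_det_nz invertible_left_inverse by blast
  then have "det (transpose A) = 0" by simp
  then have "\<not> (\<exists>B. B ** transpose A = mat 1)" using invertible_det_nz invertible_left_inverse by blast
  then obtain x where x: "transpose A *v x = 0" "x \<noteq> 0" unfolding matrix_left_invertible_ker by blast
  have xs: "(\<Sum>i\<in>UNIV. x$i * P i j) = x$j" for j
  proof -
    have "(transpose A *v x)$j = 0" using x by simp
    moreover have "(transpose A *v x)$j = (\<Sum>i\<in>UNIV. (P i j - (if i = j then 1 else 0)) * x$i)"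
      by (simp add: A_def transpose_def matrix_vector_mult_def)
    moreover have "(\<Sum>i\<in>UNIV. (P i j - (if i = j then 1 else 0)) * x$i)
       = (\<Sum>i\<in>UNIV. x$i * P i j) - (\<Sum>i\<in>UNIV. if i = j then x$i else 0)"
    proof -
      have "(\<Sum>i\<in>UNIV. (P i j - (if i = j then 1 else 0)) * x$i)
          = (\<Sum>i\<in>UNIV. x$i * P i j - (if i = j then x$i else 0))"
        by (rule sum.cong) (auto simp: algebra_simps)
      then show ?thesis by (simp only: sum_subtractf)
    qed
    ultimately show ?thesis by simp
  qed
  define a where "a i = \<bar>x$i\<bar>" for i
  have ge: "a j \<le> (\<Sum>i\<in>UNIV. a i * P i j)" for j
  proof -
    have "a j = \<bar>\<Sum>i\<in>UNIV. x$i * P i j\<bar>" using xs a_def by simp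
    also have "\<dots> \<le> (\<Sum>i\<in>UNIV. \<bar>x$i * P i j\<bar>)" by (rule sum_abs)
    also have "\<dots> = (\<Sum>i\<in>UNIV. a i * P i j)" using s
      by (simp add: a_def abs_mult stochastic_def is_distribution_def)
    finally show ?thesis .
  qed
  have "(\<Sum>j\<in>UNIV. \<Sum>i\<in>UNIV. a i * P i j) = (\<Sum>i\<in>UNIV. \<Sum>j\<in>UNIV. a i * P i j)"
    by (rule sum.swap)
  then have "(\<Sum>j\<in>UNIV. (\<Sum>i\<in>UNIV. a i * P i j) - a j) = (\<Sum>i\<in>UNIV. a i * (\<Sum>j\<in>UNIV. P i j)) - (\<Sum>j\<in>UNIV. a j)"
    by (simp add: sum_subtractf sum_distrib_left)
  also have "\<dots> = 0" using s by (simp add: stochastic_def is_distribution_def)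
  finally have "\<forall>j\<in>UNIV. (\<Sum>i\<in>UNIV. a i * P i j) - a j = 0"
    by (subst sum_nonneg_eq_0_iff[symmetric]) (auto simp: ge)
  then have ast: "(\<Sum>i\<in>UNIV. a i * P i j) = a j" for j by simp
  obtain k where k: "x$k \<noteq> 0" using x(2) by (auto simp: vec_eq_iff)
  have "a k \<le> (\<Sum>i\<in>UNIV. a i)" by (rule member_le_sum) (auto simp: a_def)
  moreover have "a k > 0" using k by (simp add: a_def)
  ultimately have Spos: "(\<Sum>i\<in>UNIV. a i) > 0" by linarith
  define q where "q i = a i / (\<Sum>i\<in>UNIV. a i)" for i
  have "is_stationary P q"
    unfolding is_stationary_def is_distribution_def
  proof (intro conjI allI)
    show "0 \<le> q i" for i using Spos by (simp add: q_def a_def)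
    show "(\<Sum>i\<in>UNIV. q i) = 1" using Spos by (simp add: q_def sum_divide_distrib[symmetric])
    show "(\<Sum>i\<in>UNIV. q i * P i j) = q j" for j
      using ast[of j] by (simp add: q_def sum_divide_distrib[symmetric])
  qed
  then show ?thesis by blast
qed

lemma stationary_dist_ok:
  assumes "stochastic P" "irreducible_chain P"
  shows "is_stationary P (stationary_dist P)"
proof -
  obtain q where q: "is_stationary P q" using stat_exists[OF assms(1)] by blast
  show ?thesis unfolding stationary_dist_def
    by (rule theI[of _ q]) (use q stat_unique[OF assms] in auto)
qed



lemma max_principle:
  fixes P :: "'S::finite \<Rightarrow> 'S \<Rightarrow> real"
  assumes s: "stochastic P" and irr: "irreducible_chain P"
    and fx: "\<forall>i. (\<Sum>j\<in>UNIV. P i j * x j) = x i"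
  shows "x j = x k"
proof -
  have "Max (range x) \<in> range x" by (rule Max_in) auto
  then obtain i0 where i0': "Max (range x) = x i0" by blast
  note i0 = i0'[symmetric]
  have le: "x l \<le> x i0" for l unfolding i0 by (rule Max_ge) auto
  have eq: "x l = x i0" for l
  proof -
    obtain n where n: "nstep P n i0 l > 0" using irr unfolding irreducible_chain_def by blast
    have "(\<Sum>m\<in>UNIV. nstep P n i0 m * (x i0 - x m)) = x i0 * (\<Sum>m\<in>UNIV. nstep P n i0 m) - (\<Sum>m\<in>UNIV. nstep P n i0 m * x m)"
      by (simp add: right_diff_distrib sum_subtractf sum_distrib_left sum_distrib_right mult.commute)
    also have "\<dots> = 0" using nstep_rowsum[OF s] nstep_right_fix[OF fx] by simp
    finally have "\<forall>m\<in>UNIV. nstep P n i0 m * (x i0 - x m) = 0"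
      by (subst sum_nonneg_eq_0_iff[symmetric]) (auto simp: le nstep_nonneg[OF s])
    then have "nstep P n i0 l * (x i0 - x l) = 0" by blast
    then show ?thesis using n by simp
  qed
  show ?thesis using eq[of j] eq[of k] by simp
qed

locale revchain =
  fixes P :: "'S::finite \<Rightarrow> 'S \<Rightarrow> real" and p :: "'S \<Rightarrow> real" and lam :: real
  assumes stoch: "stochastic P" and irr: "irreducible_chain P"
    and ppos: "\<And>i. p i > 0" and psum: "(\<Sum>i\<in>UNIV. p i) = 1"
    and rev: "\<And>z z'. p z * P z z' = p z' * P z' z"
    and eig: "\<And>\<mu>. is_eigenvalue (trans_matrix P) \<mu> \<Longrightarrow> \<mu> \<noteq> 1 \<Longrightarrow> \<mu> \<le> lam"
begin

definition ip :: "real^'S \<Rightarrow> real^'S \<Rightarrow> real" where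
  "ip x y = (\<Sum>i\<in>UNIV. p i * x$i * y$i)"

definition Pv :: "real^'S \<Rightarrow> real^'S" where
  "Pv x = (\<chi> i. \<Sum>j\<in>UNIV. P i j * x$j)"

definition one :: "real^'S" where "one = (\<chi> i. 1)"

lemma Pv_nth: "Pv x $ i = (\<Sum>j\<in>UNIV. P i j * x$j)"
  by (simp add: Pv_def)

lemma ip_sym: "ip x y = ip y x"
  unfolding ip_def by (simp add: mult.commute mult.left_commute)

lemma ip_add_left: "ip (x + y) z = ip x z + ip y z"
  unfolding ip_def by (simp add: algebra_simps sum.distrib)

lemma ip_add_right: "ip z (x + y) = ip z x + ip z y"
  using ip_add_left ip_sym by metis

lemma ip_diff_left: "ip (x - y) z = ip x z - ip y z"
  unfolding ip_def by (simp add: algebra_simps sum_subtractf)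

lemma ip_scale_left: "ip (c *\<^sub>R x) y = c * ip x y"
  unfolding ip_def by (simp add: algebra_simps sum_distrib_left)

lemma ip_scale_right: "ip x (c *\<^sub>R y) = c * ip x y"
  using ip_scale_left ip_sym by metis

lemma Pv_add: "Pv (x + y) = Pv x + Pv y"
  by (simp add: Pv_def vec_eq_iff algebra_simps sum.distrib)

lemma Pv_scale: "Pv (c *\<^sub>R x) = c *\<^sub>R Pv x"
  by (simp add: Pv_def vec_eq_iff algebra_simps sum_distrib_left)

lemma Pv_one: "Pv one = one"
  using stoch by (simp add: Pv_def one_def vec_eq_iff stochastic_def is_distribution_def)

lemma ip_nonneg: "ip x x \<ge> 0"
  unfolding ip_def using ppos by (auto intro!: sum_nonneg simp: mult.assoc less_imp_le)

lemma ip_zero: "ip x x = 0 \<Longrightarrow> x = 0"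
proof -
  assume "ip x x = 0"
  then have "\<forall>i\<in>UNIV. p i * x$i * x$i = 0"
    unfolding ip_def
    by (subst sum_nonneg_eq_0_iff[symmetric]) (auto simp: mult.assoc less_imp_le ppos)
  then show "x = 0" using ppos by (auto simp: vec_eq_iff) (metis less_irrefl)
qed

lemma selfadj: "ip x (Pv y) = ip (Pv x) y"
proof -
  have "ip x (Pv y) = (\<Sum>i\<in>UNIV. \<Sum>j\<in>UNIV. (p i * P i j) * x$i * y$j)"
    unfolding ip_def Pv_nth by (simp add: sum_distrib_left mult.commute mult.left_commute)
  also have "\<dots> = (\<Sum>i\<in>UNIV. \<Sum>j\<in>UNIV. (p j * P j i) * x$i * y$j)"
    by (simp add: rev)
  also have "\<dots> = (\<Sum>j\<in>UNIV. \<Sum>i\<in>UNIV. (p j * P j i) * x$i * y$j)"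
    by (rule sum.swap)
  also have "\<dots> = ip (Pv x) y"
    unfolding ip_def Pv_nth by (simp add: sum_distrib_left sum_distrib_right mult.commute mult.left_commute)
  finally show ?thesis .
qed

lemma one_Pv: "ip one (Pv x) = ip one x"
  using selfadj[of one x] Pv_one by simp

lemma Pv_trans: "trans_matrix P *v x = Pv x"
  by (simp add: trans_matrix_def Pv_def matrix_vector_mult_def vec_eq_iff)

lemma ip_pos: "x \<noteq> 0 \<Longrightarrow> ip x x > 0"
  using ip_nonneg[of x] ip_zero[of x] by linarith

lemma expand: "ip (x + t *\<^sub>R h) (x + t *\<^sub>R h) = ip x x + 2 * t * ip h x + t\<^sup>2 * ip h h"
  by (simp add: ip_add_left ip_add_right ip_scale_left ip_scale_right ip_sym[of x h] power2_eq_square algebra_simps)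

lemma expandQ: "ip (x + t *\<^sub>R h) (Pv (x + t *\<^sub>R h)) = ip x (Pv x) + 2 * t * ip h (Pv x) + t\<^sup>2 * ip h (Pv h)"
proof -
  have "ip x (Pv h) = ip h (Pv x)" using selfadj[of x h] ip_sym by metis
  then show ?thesis
    by (simp add: Pv_add Pv_scale ip_add_left ip_add_right ip_scale_left ip_scale_right power2_eq_square algebra_simps)
qed

lemma quad_zero:
  fixes a c :: real
  assumes c: "c \<ge> 0" and h: "\<And>t. 2 * t * a + t\<^sup>2 * c \<ge> 0"
  shows "a = 0"
proof (rule ccontr)
  assume a: "a \<noteq> 0"
  define t where "t = - a / (c + 1)"
  have cp: "c + 1 \<noteq> 0" using c by linarith
  have "2 * t * a + t\<^sup>2 * c = a\<^sup>2 * (- c - 2) / (c + 1)\<^sup>2"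
    using cp unfolding t_def by (simp add: divide_simps power2_eq_square) (simp add: algebra_simps)
  also have "\<dots> < 0" using a c by (intro divide_neg_pos mult_pos_neg) auto
  finally show False using h[of t] by linarith
qed

lemma rayleigh:
  assumes x1: "ip one x = 0"
  shows "ip x (Pv x) \<le> lam * ip x x"
proof (cases "x = 0")
  case True then show ?thesis by (simp add: ip_def)
next
  case False
  define K where "K = {y. ip one y = 0 \<and> ip y y = 1}"
  define Q where "Q y = ip y (Pv y)" for y
  have scale: "ip one y = 0 \<Longrightarrow> y \<noteq> 0 \<Longrightarrow> (1 / sqrt (ip y y)) *\<^sub>R y \<in> K" for y
    using ip_pos[of y] by (simp add: K_def ip_scale_left ip_scale_right)
  have Kne: "K \<noteq> {}" using scale[OF x1 False] by blast
  have cont_ip: "continuous_on UNIV (\<lambda>y. ip (f y) (g y))"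
    if "continuous_on UNIV f" "continuous_on UNIV g" for f g :: "real^'S \<Rightarrow> real^'S"
    unfolding ip_def by (intro continuous_intros that)
  have cont_Pv: "continuous_on UNIV Pv"
    unfolding Pv_def by (intro continuous_intros)
  have closedK: "closed K"
  proof -
    have "K = {y. ip one y = 0} \<inter> {y. ip y y = 1}" by (auto simp: K_def)
    moreover have "closed {y. ip one y = 0}"
      by (rule closed_Collect_eq) (intro cont_ip continuous_intros)+
    moreover have "closed {y. ip y y = 1}"
      by (rule closed_Collect_eq) (intro cont_ip continuous_intros)+
    ultimately show ?thesis by auto
  qed
  define pm where "pm = Min (range p)"
  have pm_in: "pm \<in> range p" unfolding pm_def by (rule Min_in) auto
  then have pmpos: "pm > 0" using ppos by auto
  have pmle: "pm \<le> p i" for i unfolding pm_def by (rule Min_le) auto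
  have boundedK: "bounded K"
    unfolding bounded_iff
  proof (intro exI ballI)
    fix y assume "y \<in> K"
    then have y1: "ip y y = 1" by (simp add: K_def)
    have comp: "\<bar>y$i\<bar> \<le> 1 + 1 / pm" for i
    proof -
      have "p i * y$i * y$i \<le> ip y y"
        unfolding ip_def by (rule member_le_sum[where f="\<lambda>i. p i * y$i * y$i"])
          (auto simp: mult.assoc less_imp_le ppos)
      then have "pm * (y$i)\<^sup>2 \<le> 1"
        using y1 mult_right_mono[OF pmle[of i], of "(y$i)\<^sup>2"] by (simp add: power2_eq_square mult.assoc)
      then have "(y$i)\<^sup>2 \<le> 1 / pm" using pmpos by (simp add: field_simps)
      moreover have "\<bar>y$i\<bar> \<le> 1 + (y$i)\<^sup>2"
      proof (cases "\<bar>y$i\<bar> \<le> 1")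
        case True then show ?thesis using zero_le_power2[of "y$i"] by linarith
      next
        case False
        then have "\<bar>y$i\<bar> * 1 \<le> \<bar>y$i\<bar> * \<bar>y$i\<bar>" by (intro mult_left_mono) auto
        then show ?thesis by (simp add: power2_eq_square abs_mult_self_eq)
      qed
      ultimately show ?thesis by linarith
    qed
    have "norm y \<le> (\<Sum>i\<in>UNIV. \<bar>y$i\<bar>)" by (rule norm_le_l1_cart)
    also have "\<dots> \<le> (\<Sum>i\<in>(UNIV::'S set). 1 + 1 / pm)" by (rule sum_mono) (rule comp)
    finally show "norm y \<le> real CARD('S) * (1 + 1 / pm)" by simp
  qed
  have "compact K" using closedK boundedK by (simp add: compact_eq_bounded_closed)
  moreover have "continuous_on K Q"
    unfolding Q_def by (rule continuous_on_subset[OF cont_ip]) (auto intro: cont_Pv continuous_intros)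
  ultimately obtain x0 where x0K: "x0 \<in> K" and x0max: "\<forall>y\<in>K. Q y \<le> Q x0"
    using continuous_attains_sup[OF _ Kne] by blast
  define M where "M = Q x0"
  have x01: "ip one x0 = 0" and x0n: "ip x0 x0 = 1" using x0K by (auto simp: K_def)
  have bound: "Q y \<le> M * ip y y" if y1: "ip one y = 0" for y
  proof (cases "y = 0")
    case True then show ?thesis by (simp add: Q_def ip_def)
  next
    case False
    define c where "c = 1 / sqrt (ip y y)"
    have yp: "ip y y > 0" using ip_pos[OF False] .
    have "Q (c *\<^sub>R y) \<le> M" using x0max scale[OF y1 False] by (simp add: M_def c_def)
    moreover have "Q (c *\<^sub>R y) = c\<^sup>2 * Q y"
      by (simp add: Q_def Pv_scale ip_scale_left ip_scale_right power2_eq_square)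
    moreover have "c\<^sup>2 = 1 / ip y y" using yp by (simp add: c_def power_divide)
    ultimately have "Q y / ip y y \<le> M" by simp
    then show ?thesis using yp by (simp add: field_simps)
  qed
  have orth: "M * ip h x0 - ip h (Pv x0) = 0" if h1: "ip one h = 0" for h
  proof (rule quad_zero)
    show "M * ip h h - ip h (Pv h) \<ge> 0" using bound[OF h1] by (simp add: Q_def)
    fix t
    have "ip one (x0 + t *\<^sub>R h) = 0" using x01 h1 by (simp add: ip_add_right ip_scale_right)
    from bound[OF this] have "0 \<le> M * ip (x0 + t *\<^sub>R h) (x0 + t *\<^sub>R h) - Q (x0 + t *\<^sub>R h)" by simp
    also have "\<dots> = 2 * t * (M * ip h x0 - ip h (Pv x0)) + t\<^sup>2 * (M * ip h h - ip h (Pv h))"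
      unfolding Q_def expand expandQ using x0n by (simp add: M_def Q_def algebra_simps)
    finally show "0 \<le> 2 * t * (M * ip h x0 - ip h (Pv x0)) + t\<^sup>2 * (M * ip h h - ip h (Pv h))" .
  qed
  define w where "w = M *\<^sub>R x0 - Pv x0"
  have "ip one w = M * ip one x0 - ip one (Pv x0)"
    by (simp add: w_def ip_def algebra_simps sum_subtractf sum_distrib_left)
  then have w1: "ip one w = 0" using x01 one_Pv[of x0] by simp
  have "M * ip w x0 - ip w (Pv x0) = ip w w"
    by (simp add: w_def ip_diff_left ip_scale_left ip_sym[of _ x0] ip_sym[of _ "Pv x0"] algebra_simps)
  then have "ip w w = 0" using orth[OF w1] by simp
  then have "w = 0" by (rule ip_zero)
  then have eigv: "Pv x0 = M *\<^sub>R x0" by (simp add: w_def)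
  have x0nz: "x0 \<noteq> 0" using x0n by (auto simp: ip_def)
  have "is_eigenvalue (trans_matrix P) M"
    unfolding is_eigenvalue_def using eigv x0nz Pv_trans by auto
  moreover have "M \<noteq> 1"
  proof
    assume "M = 1"
    then have "\<forall>i. (\<Sum>j\<in>UNIV. P i j * x0$j) = x0$i" using eigv by (simp add: vec_eq_iff Pv_nth)
    then have c: "x0$j = x0$k" for j k using max_principle[OF stoch irr, of "\<lambda>j. x0$j"] by blast
    have "ip one x0 = x0$k * (\<Sum>i\<in>UNIV. p i)" for k
    proof -
      have "ip one x0 = (\<Sum>i\<in>UNIV. p i * x0$k)"
        unfolding ip_def one_def
      proof (rule sum.cong)
        fix i
        have "x0$i = x0$k" by (rule c)
        then show "p i * (\<chi> i. 1) $ i * x0 $ i = p i * x0 $ k" by simp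
      qed simp
      then show ?thesis by (simp add: sum_distrib_right[symmetric] mult.commute)
    qed
    then have "x0$k = 0" for k using x01 psum by simp
    then show False using x0nz by (simp add: vec_eq_iff)
  qed
  ultimately have "M \<le> lam" using eig by blast
  then show ?thesis using bound[OF x1] ip_nonneg[of x] mult_right_mono[of M lam "ip x x"]
    by (simp add: Q_def)
qed

end



context revchain begin

definition Sg :: "real \<Rightarrow> 'S \<Rightarrow> 'S \<Rightarrow> real" where
  "Sg \<gamma> z s = (\<Sum>t. \<gamma> ^ t * nstep P t z s)"

lemma summ: assumes "0 \<le> \<gamma>" "\<gamma> < 1" shows "summable (\<lambda>t. \<gamma> ^ t * nstep P t z s)"
proof (rule summable_comparison_test[where g="\<lambda>t. \<gamma> ^ t"])
  show "\<exists>N. \<forall>n\<ge>N. norm (\<gamma> ^ n * nstep P n z s) \<le> \<gamma> ^ n"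
    using assms nstep_nonneg[OF stoch] nstep_le1[OF stoch]
    by (auto simp: abs_mult intro!: mult_left_le)
  show "summable (\<lambda>t. \<gamma> ^ t)" using assms by (simp add: summable_geometric)
qed

lemma Srec: assumes "0 \<le> \<gamma>" "\<gamma> < 1"
  shows "Sg \<gamma> z s = (if z = s then 1 else 0) + \<gamma> * (\<Sum>k\<in>UNIV. Sg \<gamma> z k * P k s)"
proof -
  let ?f = "\<lambda>t. \<gamma> ^ t * nstep P t z s"
  have "(\<Sum>n. ?f (Suc n)) = Sg \<gamma> z s - ?f 0"
    unfolding Sg_def by (rule suminf_split_head[OF summ[OF assms]])
  moreover have "(\<Sum>n. ?f (Suc n)) = (\<Sum>n. \<Sum>k\<in>UNIV. (\<gamma> * P k s) * (\<gamma> ^ n * nstep P n z k))"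
    by (simp add: sum_distrib_left mult_ac)
  moreover have "\<dots> = (\<Sum>k\<in>UNIV. \<Sum>n. (\<gamma> * P k s) * (\<gamma> ^ n * nstep P n z k))"
    by (rule suminf_sum) (intro summable_mult summ[OF assms])
  moreover have "\<dots> = (\<Sum>k\<in>UNIV. (\<gamma> * P k s) * Sg \<gamma> z k)"
    unfolding Sg_def by (intro sum.cong refl suminf_mult summ[OF assms])
  ultimately show ?thesis by (simp add: sum_distrib_left mult_ac)
qed

lemma tv_sq:
  assumes g0: "0 < \<gamma>" and g1: "\<gamma> < 1" and lam1: "lam < 1"
    and m0: "m > 0" and mle: "\<And>i. m \<le> p i"
  shows "(tv_diff P \<gamma> z z')\<^sup>2 \<le> ((1 - \<gamma>) / (1 - \<gamma> * lam))\<^sup>2 / (2 * m)"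
proof -
  have gg: "0 \<le> \<gamma>" "\<gamma> < 1" using g0 g1 by auto
  define D where "D s = Sg \<gamma> z s - Sg \<gamma> z' s" for s
  define nu where "nu s = (if z = s then 1 else 0) - (if z' = s then 1 else (0::real))" for s
  have Drec: "D s = nu s + \<gamma> * (\<Sum>k\<in>UNIV. D k * P k s)" for s
    unfolding D_def nu_def
    by (subst (1 2) Srec[OF gg]) (simp add: algebra_simps sum_subtractf)
  have Dsum: "(\<Sum>s\<in>UNIV. D s) = 0"
  proof -
    have nus: "(\<Sum>s\<in>UNIV. nu s) = 0" by (simp add: nu_def sum_subtractf)
    have "(\<Sum>s\<in>UNIV. \<Sum>k\<in>UNIV. D k * P k s) = (\<Sum>k\<in>UNIV. \<Sum>s\<in>UNIV. D k * P k s)"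
      by (rule sum.swap)
    also have "\<dots> = (\<Sum>k\<in>UNIV. D k)"
      using stoch by (simp add: sum_distrib_left[symmetric] stochastic_def is_distribution_def)
    finally have "(\<Sum>s\<in>UNIV. D s) = \<gamma> * (\<Sum>s\<in>UNIV. D s)"
      by (subst (1) Drec) (simp add: sum.distrib nus sum_distrib_left[symmetric])
    then show ?thesis using g1 by (metis mult_cancel_right1 mult.commute less_irrefl)
  qed
  define g where "g = (\<chi> s. D s / p s)"
  define h where "h = (\<chi> s. nu s / p s)"
  have pnz: "p i \<noteq> 0" for i using ppos[of i] by simp
  have grec: "g $ s = h $ s + \<gamma> * Pv g $ s" for s
  proof -
    have "(\<Sum>k\<in>UNIV. D k * P k s) / p s = (\<Sum>k\<in>UNIV. P s k * (D k / p k))"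
      unfolding sum_divide_distrib
    proof (rule sum.cong)
      fix k
      have "P k s = p s * P s k / p k" using rev[of k s] pnz[of k] by (simp add: field_simps)
      then show "D k * P k s / p s = P s k * (D k / p k)" using pnz[of s] pnz[of k] by simp
    qed simp
    moreover have "g$s = nu s / p s + \<gamma> * ((\<Sum>k\<in>UNIV. D k * P k s) / p s)"
      unfolding g_def using Drec[of s] by (simp add: add_divide_distrib)
    ultimately show ?thesis by (simp add: h_def Pv_nth g_def)
  qed
  have g1': "ip one g = 0"
  proof -
    have "ip one g = (\<Sum>s\<in>UNIV. D s)" unfolding ip_def one_def g_def using pnz by simp
    then show ?thesis using Dsum by simp
  qed
  have eq1: "ip g g = ip g h + \<gamma> * ip g (Pv g)"
  proof -
    have "ip g g = (\<Sum>i\<in>UNIV. p i * g$i * (h$i + \<gamma> * Pv g $ i))"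
      unfolding ip_def using grec by simp
    then show ?thesis unfolding ip_def by (simp add: algebra_simps sum.distrib sum_distrib_left)
  qed
  define t where "t = 1 - \<gamma> * lam"
  have tpos: "t > 0"
  proof (cases "lam \<ge> 0")
    case True
    then have "\<gamma> * lam \<le> 1 * lam" using g1 by (intro mult_right_mono) auto
    then show ?thesis using lam1 by (simp add: t_def)
  next
    case False
    then have "\<gamma> * lam < 0" using g0 by (intro mult_pos_neg) auto
    then show ?thesis by (simp add: t_def)
  qed
  have "\<gamma> * ip g (Pv g) \<le> \<gamma> * (lam * ip g g)"
    using rayleigh[OF g1'] g0 by (intro mult_left_mono) auto
  then have ineq1: "t * ip g g \<le> ip g h" using eq1 by (simp add: t_def algebra_simps)
  have amgm: "2 * ip g h \<le> t * ip g g + ip h h / t"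
  proof -
    have "0 \<le> (\<Sum>i\<in>UNIV. p i * (t * g$i - h$i)\<^sup>2 / t)"
      using ppos tpos by (intro sum_nonneg) (simp add: less_imp_le)
    also have "\<dots> = (\<Sum>i\<in>UNIV. t * (p i * g$i * g$i) + p i * h$i * h$i / t - 2 * (p i * g$i * h$i))"
      using tpos by (intro sum.cong refl) (simp add: power2_eq_square field_simps)
    also have "\<dots> = t * ip g g + ip h h / t - 2 * ip g h"
      unfolding ip_def by (simp add: sum_subtractf sum.distrib sum_distrib_left sum_divide_distrib)
    finally show ?thesis by simp
  qed
  have Ng: "t\<^sup>2 * ip g g \<le> ip h h"
  proof -
    have "2 * t * ip g g \<le> t * ip g g + ip h h / t" using ineq1 amgm by linarith
    then have "t * ip g g \<le> ip h h / t" by simp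
    then show ?thesis using tpos by (simp add: field_simps power2_eq_square)
  qed
  define a where "a = (\<Sum>s\<in>UNIV. p s * \<bar>g$s\<bar>)"
  have a2: "a\<^sup>2 \<le> ip g g"
  proof -
    have "0 \<le> (\<Sum>i\<in>UNIV. p i * (\<bar>g$i\<bar> - a)\<^sup>2)"
      using ppos by (intro sum_nonneg) (simp add: less_imp_le)
    also have "\<dots> = (\<Sum>i\<in>UNIV. p i * g$i * g$i - 2 * a * (p i * \<bar>g$i\<bar>) + a\<^sup>2 * p i)"
      by (intro sum.cong refl) (simp add: power2_eq_square algebra_simps abs_mult_self_eq)
    also have "\<dots> = ip g g - 2 * a * a + a\<^sup>2 * (\<Sum>i\<in>UNIV. p i)"
      unfolding ip_def by (simp add: sum_subtractf sum.distrib sum_distrib_left a_def)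
    finally show ?thesis using psum by (simp add: power2_eq_square)
  qed
  have tv: "tv_diff P \<gamma> z z' = (1 - \<gamma>) / 2 * a"
  proof -
    have "tv_diff P \<gamma> z z' = (1/2) * (\<Sum>s\<in>UNIV. (1 - \<gamma>) * \<bar>D s\<bar>)"
      unfolding tv_diff_def occupation_def D_def Sg_def
      using g1 by (simp add: right_diff_distrib[symmetric] abs_mult)
    also have "\<dots> = (1 - \<gamma>) / 2 * a"
      unfolding a_def g_def using ppos pnz
      by (simp add: sum_distrib_left abs_divide abs_of_pos less_imp_le)
    finally show ?thesis .
  qed
  have Nh: "ip h h \<le> 2 / m"
  proof -
    have "ip h h = (\<Sum>s\<in>UNIV. (nu s)\<^sup>2 / p s)"
      unfolding ip_def h_def using pnz by (simp add: power2_eq_square)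
    also have "\<dots> \<le> (\<Sum>s\<in>UNIV. ((if z = s then 1 else 0) + (if z' = s then 1 else 0)) / m)"
    proof (rule sum_mono)
      fix s
      have "(nu s)\<^sup>2 \<le> (if z = s then 1 else 0) + (if z' = s then 1 else 0)"
        by (simp add: nu_def)
      moreover have "(nu s)\<^sup>2 / p s \<le> (nu s)\<^sup>2 / m"
        using m0 mle[of s] by (intro divide_left_mono) auto
      ultimately show "(nu s)\<^sup>2 / p s \<le> ((if z = s then 1 else 0) + (if z' = s then 1 else 0)) / m"
        using m0 by (meson divide_right_mono less_imp_le order_trans)
    qed
    also have "\<dots> = 2 / m" by (simp add: sum_divide_distrib[symmetric] sum.distrib)
    finally show ?thesis .
  qed
  have "(tv_diff P \<gamma> z z')\<^sup>2 = (1 - \<gamma>)\<^sup>2 / 4 * a\<^sup>2" unfolding tv by (simp add: power2_eq_square)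
  also have "\<dots> \<le> (1 - \<gamma>)\<^sup>2 / 4 * ip g g" by (intro mult_left_mono a2) auto
  also have "\<dots> \<le> (1 - \<gamma>)\<^sup>2 / 4 * (ip h h / t\<^sup>2)"
    using Ng tpos by (intro mult_left_mono) (auto simp: field_simps)
  also have "\<dots> \<le> (1 - \<gamma>)\<^sup>2 / 4 * (2 / m / t\<^sup>2)"
    using Nh tpos by (intro mult_left_mono divide_right_mono) auto
  also have "\<dots> = ((1 - \<gamma>) / t)\<^sup>2 / (2 * m)"
    by (simp add: power_divide field_simps)
  finally show ?thesis by (simp add: t_def)
qed

end



lemma final_arith:
  fixes lam eps \<gamma> m tv :: real
  assumes lam1: "lam < 1" and e0: "eps > 0" and g0: "0 < \<gamma>" and g1: "\<gamma> < 1"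
    and m0: "m > 0" and m1: "m \<le> 1" and tv0: "tv \<ge> 0"
    and tvb: "tv\<^sup>2 \<le> ((1 - \<gamma>) / (1 - \<gamma> * lam))\<^sup>2 / (2 * m)"
    and gb: "\<gamma> \<ge> (1 - m * eps) / (1 - lam * m * eps)"
  shows "tv \<le> eps"
proof -
  define t where "t = 1 - \<gamma> * lam"
  have tpos: "t > 0"
  proof (cases "lam \<ge> 0")
    case True
    then have "\<gamma> * lam \<le> 1 * lam" using g1 by (intro mult_right_mono) auto
    then show ?thesis using lam1 by (simp add: t_def)
  next
    case False
    then have "\<gamma> * lam < 0" using g0 by (intro mult_pos_neg) auto
    then show ?thesis by (simp add: t_def)
  qed
  define c where "c = (1 - \<gamma>) / t"
  have c0: "c > 0" using tpos g1 by (simp add: c_def)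
  have c1: "c \<le> 1"
  proof -
    have "\<gamma> * lam \<le> \<gamma> * 1" using g0 lam1 by (intro mult_left_mono) auto
    then have "1 - \<gamma> \<le> t" by (simp add: t_def)
    then show ?thesis using tpos by (simp add: c_def)
  qed
  have tvb': "tv\<^sup>2 \<le> c\<^sup>2 / (2 * m)" using tvb by (simp add: c_def t_def)
  have "tv\<^sup>2 \<le> eps\<^sup>2"
  proof (cases "1 - lam * m * eps > 0")
    case True
    then have "1 - m * eps \<le> \<gamma> * (1 - lam * m * eps)" using gb by (simp add: field_simps)
    then have "1 - \<gamma> \<le> m * eps * t" by (simp add: t_def algebra_simps)
    then have cle: "c \<le> m * eps" using tpos by (simp add: c_def field_simps)
    then have "c\<^sup>2 \<le> (m * eps)\<^sup>2" using c0 by (intro power_mono) auto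
    then have "c\<^sup>2 / (2 * m) \<le> (m * eps)\<^sup>2 / (2 * m)" using m0 by (intro divide_right_mono) auto
    also have "\<dots> = m / 2 * eps\<^sup>2" using m0 by (simp add: power2_eq_square field_simps)
    also have "\<dots> \<le> 1 * eps\<^sup>2" using m1 by (intro mult_right_mono) auto
    finally show ?thesis using tvb' by simp
  next
    case False
    then have h: "lam * (m * eps) \<ge> 1" by (simp add: mult.assoc)
    have me: "m * eps > 0" using m0 e0 by simp
    have lp: "lam > 0"
    proof (rule ccontr)
      assume "\<not> lam > 0"
      then have "lam * (m * eps) \<le> 0" using me by (simp add: mult_nonpos_nonneg)
      then show False using h by simp
    qed
    have "lam * (m * eps) < 1 * (m * eps)" using lam1 me by (intro mult_strict_right_mono) auto
    then have me1: "m * eps > 1" using h by simp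
    moreover have "m * eps \<le> 1 * eps" using m1 e0 by (intro mult_right_mono) auto
    ultimately have e1: "eps > 1" by simp
    have "c\<^sup>2 \<le> 1" using c0 c1 by (simp add: power_le_one)
    then have "c\<^sup>2 / (2 * m) \<le> 1 / (2 * m)" using m0 by (intro divide_right_mono) auto
    also have "\<dots> \<le> eps / 2" using me1 m0 by (simp add: field_simps)
    also have "\<dots> \<le> eps\<^sup>2" using e1 by (simp add: power2_eq_square)
    finally show ?thesis using tvb' by simp
  qed
  then show ?thesis using tv0 e0 by (simp add: power2_le_iff_abs_le abs_of_nonneg)
qed

theorem proposition3:
  fixes T :: "'S::finite \<Rightarrow> 'A::finite \<Rightarrow> 'S \<Rightarrow> real"
    and Pols :: "('S \<Rightarrow> 'A \<Rightarrow> real) set"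
    and lam eps \<gamma> :: real
  assumes T_kernel: "\<forall>s a. is_distribution (T s a)"
    and Pi_policies: "\<forall>pol\<in>Pols. \<forall>s. is_distribution (pol s)"
    and ergodic: "\<forall>pol\<in>Pols. ergodic_chain (induced_chain T pol)"
    and reversible: "\<forall>pol\<in>Pols. reversible_wrt (induced_chain T pol)
                                 (stationary_dist (induced_chain T pol))"
    and lam_lt1: "lam < 1"
    and second_eig: "\<forall>pol\<in>Pols. \<forall>\<mu>. is_eigenvalue (trans_matrix (induced_chain T pol)) \<mu>
                                    \<and> \<mu> \<noteq> 1 \<longrightarrow> \<mu> \<le> lam"
    and eps_pos: "eps > 0"
    and gamma: "0 < \<gamma>" "\<gamma> < 1"
    and gamma_bound:
      "\<gamma> \<ge> (1 - (INF q\<in>{(pol, s). pol \<in> Pols}. stationary_dist (induced_chain T (fst q)) (snd q)) * eps)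
          / (1 - lam * (INF q\<in>{(pol, s). pol \<in> Pols}. stationary_dist (induced_chain T (fst q)) (snd q)) * eps)"
  shows "\<forall>pol\<in>Pols. \<forall>z z'. tv_diff (induced_chain T pol) \<gamma> z z' \<le> eps"
proof (intro ballI allI)
  fix pol z z' assume pol: "pol \<in> Pols"
  define A :: "(('S \<Rightarrow> 'A \<Rightarrow> real) \<times> 'S) set" where "A = {(pol, s). pol \<in> Pols}"
  define f where "f q = stationary_dist (induced_chain T (fst q)) (snd q)" for q
  define m where "m = (INF q\<in>A. f q)"
  have statq: "is_stationary (induced_chain T pl) (stationary_dist (induced_chain T pl))"
    if "pl \<in> Pols" for pl
    using ergodic that unfolding ergodic_chain_def by (blast intro: stationary_dist_ok)
  have fnn: "f q \<ge> 0" if "q \<in> A" for q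
    using statq[of "fst q"] that unfolding f_def A_def is_stationary_def is_distribution_def
    by (auto simp: case_prod_beta)
  have bdd: "bdd_below (f ` A)" unfolding bdd_below_def using fnn by blast
  define P where "P = induced_chain T pol"
  define p where "p = stationary_dist P"
  have erg: "stochastic P" "irreducible_chain P" using ergodic pol by (auto simp: ergodic_chain_def P_def)
  have st: "is_stationary P p" using statq[OF pol] by (simp add: P_def p_def)
  have ppos: "p i > 0" for i by (rule stat_pos[OF erg st])
  have mle: "m \<le> p i" for i
  proof -
    have "(pol, i) \<in> A" using pol by (simp add: A_def)
    then have "m \<le> f (pol, i)" unfolding m_def by (rule cINF_lower[OF bdd])
    then show ?thesis by (simp add: f_def p_def P_def)
  qed
  have m0: "m \<ge> 0" unfolding m_def
    using pol by (intro cINF_greatest) (auto simp: A_def fnn)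
  have psum: "(\<Sum>i\<in>UNIV. p i) = 1" using st by (simp add: is_stationary_def is_distribution_def)
  have "p z \<le> (\<Sum>i\<in>UNIV. p i)" by (rule member_le_sum) (auto simp: less_imp_le ppos)
  then have m1: "m \<le> 1" using mle[of z] psum by simp
  have gb: "\<gamma> \<ge> (1 - m * eps) / (1 - lam * m * eps)"
    using gamma_bound by (simp add: m_def A_def f_def)
  have mpos: "m > 0"
  proof (rule ccontr)
    assume "\<not> m > 0" then have "m = 0" using m0 by simp
    then show False using gb gamma by simp
  qed
  interpret revchain P p lam
  proof
    show "stochastic P" "irreducible_chain P" by (rule erg)+
    show "\<And>i. 0 < p i" by (rule ppos)
    show "(\<Sum>i\<in>UNIV. p i) = 1" by (rule psum)
    show "\<And>z z'. p z * P z z' = p z' * P z' z"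
      using reversible pol by (simp add: reversible_wrt_def P_def p_def)
    show "\<And>\<mu>. is_eigenvalue (trans_matrix P) \<mu> \<Longrightarrow> \<mu> \<noteq> 1 \<Longrightarrow> \<mu> \<le> lam"
      using second_eig pol by (simp add: P_def)
  qed
  have tv0: "tv_diff P \<gamma> z z' \<ge> 0" unfolding tv_diff_def by (intro mult_nonneg_nonneg sum_nonneg) auto
  have "tv_diff P \<gamma> z z' \<le> eps"
    by (rule final_arith[OF lam_lt1 eps_pos gamma mpos m1 tv0 tv_sq[OF gamma lam_lt1 mpos mle] gb])
  then show "tv_diff (induced_chain T pol) \<gamma> z z' \<le> eps" by (simp add: P_def)
qed

end
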